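(* Let $M_1,M_2,M_3:\mathcal{L}_2^n\to\mathcal{L}_2^n$ be linear bounded invertible operators. For all $u,w\in\mathcal{L}_{2+}^n$ and all $v\in\mathcal{L}_{2+}^n\setminus\{0\}$, $$\theta_{M_1,M_3}(u,w)\le\theta_{M_1,M_2}(u,v)+\theta_{M_2,M_3}(v,w).$$
   Context: $\mathcal{L}_2^n$ is the Hilbert space of measurable $u:\mathbb{R}\to\mathbb{R}^n$ with $\|u\|_2^2=\int|u(t)|^2dt<\infty$ and inner product $\langle u,v\rangle=\int u(t)^Tv(t)\,dt$; $\mathcal{L}_{2+}=\{u\in\mathcal{L}_2:u(t)=0\ \text{for}\ t<0\}$. For linear bounded invertible $M_1,M_2$ on $\mathcal{L}_2$ and $u,v\in\mathcal{L}_{2+}$, the generalized angle $\theta_{M_1,M_2}(u,v)\in[0,\pi]$ is defined by $\cos\theta_{M_1,M_2}(u,v)=\langle M_1u,M_2v\rangle/(\|M_1u\|_2\|M_2v\|_2)$ if $u,v\ne0$, and $\theta_{M_1,M_2}(u,v)=0$ otherwise. *)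

theory Defs
  imports "HOL-Analysis.Analysis"
begin

text \<open>Elements of L2^n are represented by (measurable, square integrable) functions
  real => real^'n; equality in L2 is equality almost everywhere.\<close>

definition L2 :: "(real \<Rightarrow> real^'n) set" where
  "L2 = {u. u \<in> borel_measurable lborel \<and> integrable lborel (\<lambda>t. (norm (u t))\<^sup>2)}"

definition L2_inner :: "(real \<Rightarrow> real^'n) \<Rightarrow> (real \<Rightarrow> real^'n) \<Rightarrow> real" where
  "L2_inner u v = (LINT t|lborel. u t \<bullet> v t)"

definition L2_norm :: "(real \<Rightarrow> real^'n) \<Rightarrow> real" where
  "L2_norm u = sqrt (L2_inner u u)"

definition ae_eq :: "(real \<Rightarrow> real^'n) \<Rightarrow> (real \<Rightarrow> real^'n) \<Rightarrow> bool" where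
  "ae_eq u v \<longleftrightarrow> (AE t in lborel. u t = v t)"

definition L2plus :: "(real \<Rightarrow> real^'n) set" where
  "L2plus = {u \<in> L2. AE t in lborel. t < 0 \<longrightarrow> u t = 0}"

definition L2_op :: "((real \<Rightarrow> real^'n) \<Rightarrow> (real \<Rightarrow> real^'n)) \<Rightarrow> bool" where
  "L2_op M \<longleftrightarrow> (\<forall>u\<in>L2. M u \<in> L2) \<and> (\<forall>u\<in>L2. \<forall>v\<in>L2. ae_eq u v \<longrightarrow> ae_eq (M u) (M v))"

definition lin_bdd_inv_op :: "((real \<Rightarrow> real^'n) \<Rightarrow> (real \<Rightarrow> real^'n)) \<Rightarrow> bool" where
  "lin_bdd_inv_op M \<longleftrightarrow>
     L2_op M
   \<and> (\<forall>u\<in>L2. \<forall>v\<in>L2. \<forall>a b::real.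
        ae_eq (M (\<lambda>t. a *\<^sub>R u t + b *\<^sub>R v t)) (\<lambda>t. a *\<^sub>R M u t + b *\<^sub>R M v t))
   \<and> (\<exists>C. \<forall>u\<in>L2. L2_norm (M u) \<le> C * L2_norm u)
   \<and> (\<exists>N. L2_op N \<and> (\<forall>u\<in>L2. ae_eq (N (M u)) u \<and> ae_eq (M (N u)) u))"

text \<open>Generalized angle theta_{M1,M2}(u,v); u = 0 in L2 means norm u = 0.\<close>
definition gen_angle ::
  "((real \<Rightarrow> real^'n) \<Rightarrow> (real \<Rightarrow> real^'n)) \<Rightarrow> ((real \<Rightarrow> real^'n) \<Rightarrow> (real \<Rightarrow> real^'n))
   \<Rightarrow> (real \<Rightarrow> real^'n) \<Rightarrow> (real \<Rightarrow> real^'n) \<Rightarrow> real" where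
  "gen_angle M1 M2 u v =
     (if L2_norm u = 0 \<or> L2_norm v = 0 then 0
      else arccos (L2_inner (M1 u) (M2 v) / (L2_norm (M1 u) * L2_norm (M2 v))))"

end

theory Submission
  imports Defs
begin

lemma cs2:
  fixes A B C :: real
  assumes h: "\<And>s k. 0 \<le> s^2 * A + 2 * s * k * B + k^2 * C"
  shows "0 \<le> A" "0 \<le> C" "B^2 \<le> A * C"
proof -
  show A: "0 \<le> A" using h[of 1 0] by simp
  show C: "0 \<le> C" using h[of 0 1] by simp
  show "B^2 \<le> A * C"
  proof (cases "A = 0")
    case True
    show ?thesis
    proof (rule ccontr)
      assume "\<not> ?thesis"
      then have "B \<noteq> 0" using True by simp
      have "0 \<le> (-(C+1)/(2 * B))^2 * A + 2 * (-(C+1)/(2 * B)) * 1 * B + 1^2 * C" by (rule h)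
      also have "\<dots> = -1" using True \<open>B \<noteq> 0\<close> by (simp add: field_simps)
      finally show False by simp
    qed
  next
    case False
    then have "A > 0" using A by simp
    have "0 \<le> (-B)^2 * A + 2 * (-B) * A * B + A^2 * C" by (rule h)
    also have "\<dots> = A * (A * C - B^2)" by (simp add: power2_eq_square algebra_simps)
    finally show ?thesis using \<open>A > 0\<close> by (simp add: zero_le_mult_iff)
  qed
qed

lemma cs_div:
  fixes A B C :: real
  assumes "0 \<le> A" "0 \<le> C" "B^2 \<le> A * C"
  shows "-1 \<le> B / (sqrt A * sqrt C)" "B / (sqrt A * sqrt C) \<le> 1"
proof -
  have s: "sqrt (B^2) \<le> sqrt (A * C)" using assms(3) by (rule real_sqrt_le_mono)
  have "\<bar>B\<bar> \<le> sqrt A * sqrt C"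
    using s by (simp only: real_sqrt_abs real_sqrt_mult)
  have "\<bar>B / (sqrt A * sqrt C)\<bar> \<le> 1"
  proof (cases "sqrt A * sqrt C = 0")
    case True
    then show ?thesis by (simp only: division_ring_divide_zero abs_zero)
  next
    case False
    have "0 \<le> sqrt A * sqrt C" using assms(1,2) by simp
    then have p: "0 < sqrt A * sqrt C" using False by linarith
    have "\<bar>B / (sqrt A * sqrt C)\<bar> = \<bar>B\<bar> / (sqrt A * sqrt C)" using p by simp
    also have "\<dots> \<le> 1" using p \<open>\<bar>B\<bar> \<le> sqrt A * sqrt C\<close> by (simp only: divide_le_eq_1_pos)
    finally show ?thesis .
  qed
  then show "-1 \<le> B / (sqrt A * sqrt C)" "B / (sqrt A * sqrt C) \<le> 1" by (simp_all only: abs_le_iff) linarith+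
qed

lemma angle_real:
  fixes a b c p q r :: real
  assumes psd: "\<And>s t k. 0 \<le> s^2 * a + t^2 * b + k^2 * c + 2 * s * t * p + 2 * t * k * q + 2 * s * k * r"
  shows "arccos (r / (sqrt a * sqrt c)) \<le> arccos (p / (sqrt a * sqrt b)) + arccos (q / (sqrt b * sqrt c))"
proof -
  have h1: "0 \<le> s^2 * a + 2 * s * k * p + k^2 * b" for s k
    using psd[of s k 0] by (simp add: algebra_simps)
  have h2: "0 \<le> s^2 * b + 2 * s * k * q + k^2 * c" for s k
    using psd[of 0 s k] by (simp add: algebra_simps)
  have h3: "0 \<le> s^2 * a + 2 * s * k * r + k^2 * c" for s k
    using psd[of s 0 k] by (simp add: algebra_simps)
  have xy: "0 \<le> a" "0 \<le> b" "p^2 \<le> a * b"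
    using cs2[of a p b, OF h1] by auto
  have yz: "0 \<le> c" "q^2 \<le> b * c"
    using cs2[of b q c, OF h2] by auto
  have xz: "r^2 \<le> a * c"
    using cs2[of a r c, OF h3] by auto
  note P = cs_div[OF xy]
  note Q = cs_div[OF xy(2) yz]
  note R = cs_div[OF xy(1) yz(1) xz]
  show ?thesis
  proof (cases "a = 0 \<or> b = 0 \<or> c = 0")
    case True
    then show ?thesis
      using arccos_lbound[OF P] arccos_lbound[OF Q] arccos_lbound[OF R]
        arccos_ubound[OF R] by auto
  next
    case False
    then have pos: "a > 0" "b > 0" "c > 0" using xy yz by auto
    define Pn where "Pn = p / (sqrt a * sqrt b)"
    define Qn where "Qn = q / (sqrt b * sqrt c)"
    define Rn where "Rn = r / (sqrt a * sqrt c)"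
    have npsd: "0 \<le> s^2 + t^2 + k^2 + 2 * s * t * Pn + 2 * t * k * Qn + 2 * s * k * Rn" for s t k
    proof -
      have "0 \<le> (s/sqrt a)^2 * a + (t/sqrt b)^2 * b + (k/sqrt c)^2 * c + 2 * (s/sqrt a) * (t/sqrt b) * p
              + 2 * (t/sqrt b) * (k/sqrt c) * q + 2 * (s/sqrt a) * (k/sqrt c) * r" by (rule psd)
      also have "\<dots> = s^2 + t^2 + k^2 + 2 * s * t * Pn + 2 * t * k * Qn + 2 * s * k * Rn"
      proof -
        have e1: "(s/sqrt a)^2 * a = s^2" "(t/sqrt b)^2 * b = t^2" "(k/sqrt c)^2 * c = k^2"
          using pos by (simp_all add: power_divide)
        have e2: "2 * (s/sqrt a) * (t/sqrt b) * p = 2 * s * t * Pn"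
          "2 * (t/sqrt b) * (k/sqrt c) * q = 2 * t * k * Qn"
          "2 * (s/sqrt a) * (k/sqrt c) * r = 2 * s * k * Rn"
          by (simp_all add: Pn_def Qn_def Rn_def)
        show ?thesis unfolding e1 e2 ..
      qed
      finally show ?thesis .
    qed
    have det: "(Rn - Pn * Qn)^2 \<le> (1 - Pn^2) * (1 - Qn^2)"
    proof (rule cs2(3))
      fix s k
      have "0 \<le> s^2 + (-(Pn * s+Qn * k))^2 + k^2 + 2 * s * (-(Pn * s+Qn * k)) * Pn + 2 * (-(Pn * s+Qn * k)) * k * Qn + 2 * s * k * Rn"
        by (rule npsd)
      also have "\<dots> = s^2 * (1 - Pn^2) + 2 * s * k * (Rn - Pn * Qn) + k^2 * (1 - Qn^2)"
        by (simp add: power2_eq_square algebra_simps)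
      finally show "0 \<le> s^2 * (1 - Pn^2) + 2 * s * k * (Rn - Pn * Qn) + k^2 * (1 - Qn^2)" .
    qed
    have Pb: "-1 \<le> Pn" "Pn \<le> 1" using P by (auto simp: Pn_def)
    have Qb: "-1 \<le> Qn" "Qn \<le> 1" using Q by (auto simp: Qn_def)
    have Rb: "-1 \<le> Rn" "Rn \<le> 1" using R by (auto simp: Rn_def)
    have nn: "0 \<le> 1 - Pn^2" "0 \<le> 1 - Qn^2" using Pb Qb by (simp_all add: abs_square_le_1 abs_le_iff)
    have "\<bar>Rn - Pn * Qn\<bar> \<le> sqrt (1 - Pn^2) * sqrt (1 - Qn^2)"
      using real_sqrt_le_mono[OF det] by (simp add: real_sqrt_mult)
    then have Rge: "Pn * Qn - sqrt (1 - Pn^2) * sqrt (1 - Qn^2) \<le> Rn" by linarith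
    define al where "al = arccos Pn"
    define be where "be = arccos Qn"
    have cosab: "cos (al + be) = Pn * Qn - sqrt (1 - Pn^2) * sqrt (1 - Qn^2)"
      using Pb Qb by (simp add: al_def be_def cos_add sin_arccos)
    have "arccos Rn \<le> al + be"
    proof (cases "al + be \<le> pi")
      case True
      have "0 \<le> al + be" using arccos_lbound[OF Pb] arccos_lbound[OF Qb] by (simp add: al_def be_def)
      have "arccos Rn \<le> arccos (cos (al + be))"
        by (rule arccos_le_arccos) (use Rge Rb cos_ge_minus_one[of "al+be"] in \<open>simp_all add: cosab\<close>)
      also have "\<dots> = al + be" using True \<open>0 \<le> al + be\<close> by (simp add: arccos_cos)
      finally show ?thesis .
    next
      case False
      then show ?thesis using arccos_ubound[OF Rb] by simp
    qed
    then show ?thesis by (simp add: al_def be_def Pn_def Qn_def Rn_def)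
  qed
qed

lemma L2_inner_integrable:
  assumes "x \<in> L2" "y \<in> L2"
  shows "integrable lborel (\<lambda>t. x t \<bullet> y t)"
proof (rule Bochner_Integration.integrable_bound[where f="\<lambda>t. (norm (x t))^2 + (norm (y t))^2"])
  show "integrable lborel (\<lambda>t. (norm (x t))^2 + (norm (y t))^2)"
    using assms by (simp add: L2_def)
  show "(\<lambda>t. x t \<bullet> y t) \<in> borel_measurable lborel"
    using assms unfolding L2_def by (intro borel_measurable_inner) auto
  show "AE t in lborel. norm (x t \<bullet> y t) \<le> norm ((norm (x t))^2 + (norm (y t))^2)"
  proof (rule AE_I2)
    fix t
    have "\<bar>x t \<bullet> y t\<bar> \<le> norm (x t) * norm (y t)" by (rule Cauchy_Schwarz_ineq2)
    also have "\<dots> \<le> (norm (x t))^2 + (norm (y t))^2"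
      using sum_squares_bound[of "norm (x t)" "norm (y t)"] mult_nonneg_nonneg[OF norm_ge_zero norm_ge_zero, of "x t" "y t"]
        zero_le_power2[of "norm (x t)"] zero_le_power2[of "norm (y t)"] by linarith
    finally show "norm (x t \<bullet> y t) \<le> norm ((norm (x t))^2 + (norm (y t))^2)" by simp
  qed
qed

lemma L2_psd:
  assumes X: "x \<in> L2" and Y: "y \<in> L2" and Z: "z \<in> L2"
  shows "0 \<le> s^2 * L2_inner x x + t^2 * L2_inner y y + k^2 * L2_inner z z
     + 2 * s * t * L2_inner x y + 2 * t * k * L2_inner y z + 2 * s * k * L2_inner x z"
proof -
  note I = L2_inner_integrable[OF X X] L2_inner_integrable[OF Y Y] L2_inner_integrable[OF Z Z]
    L2_inner_integrable[OF X Y] L2_inner_integrable[OF Y Z] L2_inner_integrable[OF X Z]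
  have eq: "(s *\<^sub>R x \<tau> + t *\<^sub>R y \<tau> + k *\<^sub>R z \<tau>) \<bullet> (s *\<^sub>R x \<tau> + t *\<^sub>R y \<tau> + k *\<^sub>R z \<tau>)
     = s^2 * (x \<tau> \<bullet> x \<tau>) + t^2 * (y \<tau> \<bullet> y \<tau>) + k^2 * (z \<tau> \<bullet> z \<tau>)
     + 2 * s * t * (x \<tau> \<bullet> y \<tau>) + 2 * t * k * (y \<tau> \<bullet> z \<tau>) + 2 * s * k * (x \<tau> \<bullet> z \<tau>)" for \<tau>
    by (simp add: inner_add_left inner_add_right inner_commute power2_eq_square algebra_simps)
  have "0 \<le> (LINT \<tau>|lborel. (s *\<^sub>R x \<tau> + t *\<^sub>R y \<tau> + k *\<^sub>R z \<tau>) \<bullet> (s *\<^sub>R x \<tau> + t *\<^sub>R y \<tau> + k *\<^sub>R z \<tau>))"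
    by (rule integral_nonneg_AE) simp
  also have "\<dots> = (LINT \<tau>|lborel. s^2 * (x \<tau> \<bullet> x \<tau>) + t^2 * (y \<tau> \<bullet> y \<tau>) + k^2 * (z \<tau> \<bullet> z \<tau>)
     + 2 * s * t * (x \<tau> \<bullet> y \<tau>) + 2 * t * k * (y \<tau> \<bullet> z \<tau>) + 2 * s * k * (x \<tau> \<bullet> z \<tau>))"
    unfolding eq ..
  also have "\<dots> = s^2 * L2_inner x x + t^2 * L2_inner y y + k^2 * L2_inner z z
     + 2 * s * t * L2_inner x y + 2 * t * k * L2_inner y z + 2 * s * k * L2_inner x z"
    unfolding L2_inner_def using I by (simp add: integral_add)
  finally show ?thesis .
qed

lemma L2_cs:
  assumes X: "x \<in> L2" and Y: "y \<in> L2"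
  shows "0 \<le> L2_inner x x" "0 \<le> L2_inner y y" "(L2_inner x y)^2 \<le> L2_inner x x * L2_inner y y"
proof -
  have h: "0 \<le> s^2 * L2_inner x x + 2 * s * k * L2_inner x y + k^2 * L2_inner y y" for s k
    using L2_psd[OF X Y Y, of s k 0] by (simp add: algebra_simps)
  show "0 \<le> L2_inner x x" "0 \<le> L2_inner y y" "(L2_inner x y)^2 \<le> L2_inner x x * L2_inner y y"
    using cs2[OF h] by auto
qed

lemma gen_angle_nonneg:
  assumes "M u \<in> L2" "M' v \<in> L2"
  shows "0 \<le> gen_angle M M' u v"
proof -
  note c = L2_cs[OF assms]
  show ?thesis unfolding gen_angle_def L2_norm_def[of "M u"] L2_norm_def[of "M' v"]
    using arccos_lbound[OF cs_div[OF c]] by simp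
qed

lemma op_L2: "lin_bdd_inv_op M \<Longrightarrow> u \<in> L2plus \<Longrightarrow> M u \<in> L2"
  unfolding lin_bdd_inv_op_def L2_op_def L2plus_def by blast

theorem lemma4:
  fixes M1 M2 M3 :: "(real \<Rightarrow> real^'n) \<Rightarrow> (real \<Rightarrow> real^'n)"
    and u v w :: "real \<Rightarrow> real^'n"
  assumes "lin_bdd_inv_op M1" and "lin_bdd_inv_op M2" and "lin_bdd_inv_op M3"
    and "u \<in> L2plus" and "w \<in> L2plus"
    and "v \<in> L2plus" and "L2_norm v \<noteq> 0"
  shows "gen_angle M1 M3 u w \<le> gen_angle M1 M2 u v + gen_angle M2 M3 v w"
proof -
  have X: "M1 u \<in> L2" using op_L2 assms by blast
  have Y: "M2 v \<in> L2" using op_L2 assms by blast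
  have Z: "M3 w \<in> L2" using op_L2 assms by blast
  have n1: "0 \<le> gen_angle M1 M2 u v" using X Y by (rule gen_angle_nonneg)
  have n2: "0 \<le> gen_angle M2 M3 v w" using Y Z by (rule gen_angle_nonneg)
  show ?thesis
  proof (cases "L2_norm u = 0 \<or> L2_norm w = 0")
    case True
    then show ?thesis using n1 n2 by (auto simp: gen_angle_def)
  next
    case False
    then show ?thesis using assms(7)
      unfolding gen_angle_def L2_norm_def[of "M1 u"] L2_norm_def[of "M2 v"] L2_norm_def[of "M3 w"]
      using angle_real[OF L2_psd[OF X Y Z]] by simp
  qed
qed

end
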